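(* Let $s\in[0,1]$ and let $(L_n)_{n\ge1}$, $(U_n)_{n\ge1}$ be random variables on a common probability space; set $L_0:\equiv0$, $U_0:\equiv1$. Let $\mathcal{F}_0=\{\emptyset,\Omega\}$, $\mathcal{F}_n=\sigma\{L_n,U_n\}$ for $n\ge1$, and $\mathcal{F}_{k,\infty}=\sigma\{\mathcal{F}_k,\mathcal{F}_{k+1},\dots\}$. Assume that almost surely for every $n\ge1$: $L_n\le U_n$, $L_n\in[0,1]$, $U_n\in[0,1]$; that $l_n:=\mathbb{E}L_n$ is nondecreasing with $l_n\to s$ and $u_n:=\mathbb{E}U_n$ is nonincreasing with $u_n\to s$; and that for every $n\ge1$, almost surely, $$\mathbb{E}(L_{n-1}\mid\mathcal{F}_{n,\infty})=\mathbb{E}(L_{n-1}\mid\mathcal{F}_n)\le L_n,\qquad \mathbb{E}(U_{n-1}\mid\mathcal{F}_{n,\infty})=\mathbb{E}(U_{n-1}\mid\mathcal{F}_n)\ge U_n .$$ Put $L_n^*:=\mathbb{E}(L_{n-1}\mid\mathcal{F}_n)$, $U_n^*:=\mathbb{E}(U_{n-1}\mid\mathcal{F}_n)$ and assume $U_n^*>L_n^*$ a.s. for every $n\ge1$ (so the following recursion is well defined). Define $\tilde L_0:=0$, $\tilde U_0:=1$ and for $n\ge1$ $$\tilde L_n=\tilde L_{n-1}+\frac{L_n-L_n^*}{U_n^*-L_n^*}\,(\tilde U_{n-1}-\tilde L_{n-1}),\qquad \tilde U_n=\tilde U_{n-1}-\frac{U_n^*-U_n}{U_n^*-L_n^*}\,(\tilde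 U_{n-1}-\tilde L_{n-1}).$$ Let $G_0\sim U(0,1)$ be independent of $(L_n,U_n)_{n\ge1}$, let $N:=\inf\{n\ge1:\ G_0\le\tilde L_n\ \text{or}\ G_0>\tilde U_n\}$, and let $C_s:=1$ if $G_0\le\tilde L_N$ and $C_s:=0$ otherwise. Then $N<\infty$ a.s., $\mathbb{P}(C_s=1)=s$, and $\mathbb{P}(N>n)=u_n-l_n$ for every $n\ge1$.
   Context: This formalizes "Algorithm 4": $L_n$ is a reverse-time supermartingale and $U_n$ a reverse-time submartingale with respect to $(\mathcal{F}_{n,\infty})$, and monotone sequences $\tilde L_n,\tilde U_n$ are built online from them and then used as in the scheme "output $1$ if $G_0\le\tilde L_n$, $0$ if $G_0>\tilde U_n$, else continue". *)

theory Defs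
  imports "HOL-Probability.Probability"
begin

definition gen_F :: "'a measure \<Rightarrow> (nat \<Rightarrow> 'a \<Rightarrow> real) \<Rightarrow> (nat \<Rightarrow> 'a \<Rightarrow> real) \<Rightarrow> nat \<Rightarrow> 'a measure" where
  "gen_F M L U n = (if n = 0 then sigma (space M) {}
     else vimage_algebra (space M) (\<lambda>x. (L n x, U n x)) (borel :: (real \<times> real) measure))"

definition tail_F :: "'a measure \<Rightarrow> (nat \<Rightarrow> 'a \<Rightarrow> real) \<Rightarrow> (nat \<Rightarrow> 'a \<Rightarrow> real) \<Rightarrow> nat \<Rightarrow> 'a measure" where
  "tail_F M L U k = sigma (space M) (\<Union>m\<in>{k..}. sets (gen_F M L U m))"

definition Lstar where "Lstar M L U n = real_cond_exp M (gen_F M L U n) (L (n - 1))"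
definition Ustar where "Ustar M L U n = real_cond_exp M (gen_F M L U n) (U (n - 1))"

primrec tildeLU :: "'a measure \<Rightarrow> (nat \<Rightarrow> 'a \<Rightarrow> real) \<Rightarrow> (nat \<Rightarrow> 'a \<Rightarrow> real) \<Rightarrow> nat \<Rightarrow> 'a \<Rightarrow> real \<times> real" where
  "tildeLU M L U 0 x = (0, 1)"
| "tildeLU M L U (Suc n) x =
     (let a = fst (tildeLU M L U n x); b = snd (tildeLU M L U n x);
          ls = Lstar M L U (Suc n) x; us = Ustar M L U (Suc n) x
      in (a + (L (Suc n) x - ls) / (us - ls) * (b - a),
          b - (us - U (Suc n) x) / (us - ls) * (b - a)))"

definition tildeL where "tildeL M L U n x = fst (tildeLU M L U n x)"
definition tildeU where "tildeU M L U n x = snd (tildeLU M L U n x)"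

definition stopN :: "'a measure \<Rightarrow> (nat \<Rightarrow> 'a \<Rightarrow> real) \<Rightarrow> (nat \<Rightarrow> 'a \<Rightarrow> real) \<Rightarrow> ('a \<Rightarrow> real) \<Rightarrow> 'a \<Rightarrow> enat" where
  "stopN M L U G x =
     (if \<exists>n\<ge>1. G x \<le> tildeL M L U n x \<or> G x > tildeU M L U n x
      then enat (LEAST n. n \<ge> 1 \<and> (G x \<le> tildeL M L U n x \<or> G x > tildeU M L U n x))
      else \<infinity>)"

definition coinC :: "'a measure \<Rightarrow> (nat \<Rightarrow> 'a \<Rightarrow> real) \<Rightarrow> (nat \<Rightarrow> 'a \<Rightarrow> real) \<Rightarrow> ('a \<Rightarrow> real) \<Rightarrow> 'a \<Rightarrow> nat" where
  "coinC M L U G x =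
     (case stopN M L U G x of enat k \<Rightarrow> (if G x \<le> tildeL M L U k x then 1 else 0) | \<infinity> \<Rightarrow> 0)"

end

theory Submission
  imports Defs
begin

lemma meas_sub:
  assumes "f \<in> measurable N K" "space N = space N'" "sets N \<subseteq> sets N'"
  shows "f \<in> measurable N' K"
  using measurable_mono[of K K N N'] assms by auto

lemma space_gen_F[simp]: "space (gen_F M L U n) = space M"
  by (simp add: gen_F_def)

lemma sets_gen_F_sub:
  assumes "\<And>n. L n \<in> borel_measurable M" "\<And>n. U n \<in> borel_measurable M"
  shows "sets (gen_F M L U n) \<subseteq> sets M"
proof (cases "n = 0")
  case True
  then show ?thesis by (simp add: gen_F_def sigma_sets_empty_eq)
next
  case False
  have m: "(\<lambda>x. (L n x, U n x)) \<in> M \<rightarrow>\<^sub>M (borel :: (real\<times>real) measure)"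
    unfolding borel_prod[symmetric] using assms by (intro measurable_Pair)
  have "sigma_sets (space M) {(\<lambda>x. (L n x, U n x)) -` A \<inter> space M | A. A \<in> sets (borel :: (real\<times>real) measure)} \<subseteq> sets M"
    by (rule sets.sigma_sets_subset) (use m in \<open>auto intro: measurable_sets\<close>)
  then show ?thesis using False by (simp add: gen_F_def sets_vimage_algebra)
qed

lemma gen_sets_Pow: "sets (gen_F M L U m) \<subseteq> Pow (space M)"
  using sets.space_closed[of "gen_F M L U m"] by simp

lemma space_tail_F[simp]: "space (tail_F M L U k) = space M"
  unfolding tail_F_def by (rule space_measure_of) (use gen_sets_Pow in blast)

lemma sets_tail_F: "sets (tail_F M L U k) = sigma_sets (space M) (\<Union>m\<in>{k..}. sets (gen_F M L U m))"
  unfolding tail_F_def by (rule sets_measure_of) (use gen_sets_Pow in blast)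

lemma gen_sub_tail: "k \<le> m \<Longrightarrow> sets (gen_F M L U m) \<subseteq> sets (tail_F M L U k)"
  unfolding sets_tail_F by auto

lemma tail_mono: "k \<le> k' \<Longrightarrow> sets (tail_F M L U k') \<subseteq> sets (tail_F M L U k)"
  unfolding sets_tail_F by (rule sigma_sets_mono') (auto intro: order_trans)

lemma tail_sub_M:
  assumes "\<And>n. L n \<in> borel_measurable M" "\<And>n. U n \<in> borel_measurable M"
  shows "sets (tail_F M L U k) \<subseteq> sets M"
  unfolding sets_tail_F by (rule sets.sigma_sets_subset) (rule UN_least, rule sets_gen_F_sub[OF assms])

lemma L_gen_meas:
  assumes "n \<ge> 1"
  shows "L n \<in> borel_measurable (gen_F M L U n)" "U n \<in> borel_measurable (gen_F M L U n)"
proof -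
  have m: "(\<lambda>x. (L n x, U n x)) \<in> gen_F M L U n \<rightarrow>\<^sub>M (borel :: (real\<times>real) measure)"
    using assms by (simp add: gen_F_def measurable_vimage_algebra1)
  have f: "fst \<in> (borel :: (real\<times>real) measure) \<rightarrow>\<^sub>M borel" "snd \<in> (borel :: (real\<times>real) measure) \<rightarrow>\<^sub>M borel"
    by (auto simp: borel_prod[symmetric])
  have "(\<lambda>x. fst (L n x, U n x)) \<in> borel_measurable (gen_F M L U n)"
       "(\<lambda>x. snd (L n x, U n x)) \<in> borel_measurable (gen_F M L U n)"
    using measurable_compose[OF m f(1)] measurable_compose[OF m f(2)] by (simp_all add: o_def)
  then show "L n \<in> borel_measurable (gen_F M L U n)" "U n \<in> borel_measurable (gen_F M L U n)"
    by simp_all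
qed

locale setting = prob_space M for M :: "'a measure" +
  fixes L U :: "nat \<Rightarrow> 'a \<Rightarrow> real" and G :: "'a \<Rightarrow> real" and s :: real
  assumes s01: "s \<in> {0..1}"
    and L_meas: "\<And>n. L n \<in> borel_measurable M"
    and U_meas: "\<And>n. U n \<in> borel_measurable M"
    and L0: "\<And>x. L 0 x = 0"
    and U0: "\<And>x. U 0 x = 1"
    and bounds: "AE x in M. \<forall>n\<ge>1. L n x \<le> U n x \<and> L n x \<in> {0..1} \<and> U n x \<in> {0..1}"
    and l_mono: "\<And>n. n \<ge> 1 \<Longrightarrow> prob_space.expectation M (L n) \<le> prob_space.expectation M (L (Suc n))"
    and l_lim: "(\<lambda>n. prob_space.expectation M (L n)) \<longlonglongrightarrow> s"
    and u_mono: "\<And>n. n \<ge> 1 \<Longrightarrow> prob_space.expectation M (U (Suc n)) \<le> prob_space.expectation M (U n)"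
    and u_lim: "(\<lambda>n. prob_space.expectation M (U n)) \<longlonglongrightarrow> s"
    and L_super: "\<And>n. n \<ge> 1 \<Longrightarrow> AE x in M.
        real_cond_exp M (tail_F M L U n) (L (n - 1)) x = Lstar M L U n x \<and> Lstar M L U n x \<le> L n x"
    and U_sub: "\<And>n. n \<ge> 1 \<Longrightarrow> AE x in M.
        real_cond_exp M (tail_F M L U n) (U (n - 1)) x = Ustar M L U n x \<and> Ustar M L U n x \<ge> U n x"
    and gap: "\<And>n. n \<ge> 1 \<Longrightarrow> AE x in M. Ustar M L U n x > Lstar M L U n x"
    and G_meas: "G \<in> borel_measurable M"
    and G_unif: "distr M borel G = uniform_measure lborel {0..1}"
    and G_indep: "prob_space.indep_set M {G -` A \<inter> space M | A. A \<in> sets (borel :: real measure)}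
        (sets (tail_F M L U 1))"
begin

abbreviation "tL \<equiv> tildeL M L U"
abbreviation "tU \<equiv> tildeU M L U"
abbreviation "Ls \<equiv> Lstar M L U"
abbreviation "Us \<equiv> Ustar M L U"
abbreviation "TF \<equiv> tail_F M L U"

definition "r n x = (L n x - Ls n x) / (Us n x - Ls n x)"
definition "q n x = (Us n x - U n x) / (Us n x - Ls n x)"

lemma tL0[simp]: "tL 0 x = 0" and tU0[simp]: "tU 0 x = 1"
  by (simp_all add: tildeL_def tildeU_def)

lemma tL_Suc: "tL (Suc n) x = tL n x + r (Suc n) x * (tU n x - tL n x)"
  and tU_Suc: "tU (Suc n) x = tU n x - q (Suc n) x * (tU n x - tL n x)"
  by (simp_all add: tildeL_def tildeU_def Let_def r_def q_def)

definition "good x \<longleftrightarrow> (\<forall>n. 0 \<le> L n x \<and> L n x \<le> U n x \<and> U n x \<le> 1) \<and>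
   (\<forall>n\<ge>1. Ls n x \<le> L n x \<and> U n x \<le> Us n x \<and> Ls n x < Us n x \<and>
      real_cond_exp M (TF n) (L (n - 1)) x = Ls n x \<and> real_cond_exp M (TF n) (U (n - 1)) x = Us n x)"

lemma AE_good: "AE x in M. good x"
proof -
  have a: "AE x in M. \<forall>n. 0 \<le> L n x \<and> L n x \<le> U n x \<and> U n x \<le> 1"
  proof (rule AE_mp[OF bounds], rule AE_I2, intro impI allI)
    fix x n assume h: "\<forall>n\<ge>1. L n x \<le> U n x \<and> L n x \<in> {0..1} \<and> U n x \<in> {0..1}"
    show "0 \<le> L n x \<and> L n x \<le> U n x \<and> U n x \<le> 1"
    proof (cases "n = 0")
      case True then show ?thesis by (simp add: L0 U0)
    next
      case False then show ?thesis using h[rule_format, of n] by auto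
    qed
  qed
  have b: "AE x in M. \<forall>n. n \<ge> 1 \<longrightarrow> (Ls n x \<le> L n x \<and> U n x \<le> Us n x \<and> Ls n x < Us n x \<and>
      real_cond_exp M (TF n) (L (n - 1)) x = Ls n x \<and> real_cond_exp M (TF n) (U (n - 1)) x = Us n x)"
    unfolding AE_all_countable
  proof
    fix n show "AE x in M. n \<ge> 1 \<longrightarrow> (Ls n x \<le> L n x \<and> U n x \<le> Us n x \<and> Ls n x < Us n x \<and>
      real_cond_exp M (TF n) (L (n - 1)) x = Ls n x \<and> real_cond_exp M (TF n) (U (n - 1)) x = Us n x)"
    proof (cases "n \<ge> 1")
      case True
      show ?thesis using L_super[OF True] U_sub[OF True] gap[OF True] by eventually_elim auto
    qed simp
  qed
  show ?thesis using a b unfolding good_def by eventually_elim auto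
qed

lemma rq_props:
  assumes "good x"
  shows "0 \<le> r (Suc n) x \<and> r (Suc n) x \<le> 1 \<and> 0 \<le> q (Suc n) x \<and> q (Suc n) x \<le> 1
     \<and> r (Suc n) x + q (Suc n) x \<le> 1
     \<and> r (Suc n) x * (Us (Suc n) x - Ls (Suc n) x) = L (Suc n) x - Ls (Suc n) x
     \<and> q (Suc n) x * (Us (Suc n) x - Ls (Suc n) x) = Us (Suc n) x - U (Suc n) x"
proof -
  let ?m = "Suc n"
  have g: "Ls ?m x \<le> L ?m x" "U ?m x \<le> Us ?m x" "Ls ?m x < Us ?m x" "L ?m x \<le> U ?m x"
    using assms unfolding good_def by auto
  have rq: "0 \<le> r ?m x" "0 \<le> q ?m x" "r ?m x + q ?m x \<le> 1"
    "r ?m x * (Us ?m x - Ls ?m x) = L ?m x - Ls ?m x"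
    "q ?m x * (Us ?m x - Ls ?m x) = Us ?m x - U ?m x"
    using g by (auto simp: r_def q_def add_divide_distrib[symmetric] divide_le_eq_1_pos)
  then show ?thesis by linarith
qed

lemma tl_props:
  assumes "good x"
  shows "0 \<le> tL n x \<and> tL n x \<le> tU n x \<and> tU n x \<le> 1"
proof (induction n)
  case 0 then show ?case by simp
next
  case (Suc n)
  have rq: "0 \<le> r (Suc n) x" "0 \<le> q (Suc n) x" "r (Suc n) x + q (Suc n) x \<le> 1"
    using rq_props[OF assms, of n] by auto
  have d: "0 \<le> tU n x - tL n x" using Suc by simp
  have "0 \<le> r (Suc n) x * (tU n x - tL n x)" "0 \<le> q (Suc n) x * (tU n x - tL n x)"
    using rq d by simp_all
  moreover have "(r (Suc n) x + q (Suc n) x) * (tU n x - tL n x) \<le> 1 * (tU n x - tL n x)"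
    using rq d by (intro mult_right_mono) auto
  ultimately show ?case using Suc by (simp add: tL_Suc tU_Suc algebra_simps)
qed

lemma tl_step:
  assumes "good x"
  shows "tL n x \<le> tL (Suc n) x" "tU (Suc n) x \<le> tU n x"
  using rq_props[OF assms, of n] tl_props[OF assms, of n] by (simp_all add: tL_Suc tU_Suc)

lemma tl_mono:
  assumes "good x" "n \<le> m"
  shows "tL n x \<le> tL m x" "tU m x \<le> tU n x"
  using lift_Suc_mono_le[of "\<lambda>n. tL n x", OF tl_step(1)[OF assms(1)] assms(2)]
        lift_Suc_antimono_le[of "\<lambda>n. tU n x", OF tl_step(2)[OF assms(1)] assms(2)] by auto

lemma TF_sub_M: "sets (TF k) \<subseteq> sets M"
  by (rule tail_sub_M[OF L_meas U_meas])

lemma TF_to_M: "f \<in> TF k \<rightarrow>\<^sub>M N \<Longrightarrow> f \<in> M \<rightarrow>\<^sub>M N"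
  by (erule meas_sub[OF _ _ TF_sub_M]) simp

lemma TF_mono_meas: "k \<le> k' \<Longrightarrow> f \<in> TF k' \<rightarrow>\<^sub>M N \<Longrightarrow> f \<in> TF k \<rightarrow>\<^sub>M N"
  by (erule meas_sub[OF _ _ tail_mono]) simp_all

lemma gen_to_TF: "k \<le> m \<Longrightarrow> f \<in> gen_F M L U m \<rightarrow>\<^sub>M N \<Longrightarrow> f \<in> TF k \<rightarrow>\<^sub>M N"
  by (erule meas_sub[OF _ _ gen_sub_tail]) simp_all

lemma meas_TF:
  assumes "k \<le> m" "1 \<le> m"
  shows "L m \<in> borel_measurable (TF k)" "U m \<in> borel_measurable (TF k)"
    "Ls m \<in> borel_measurable (TF k)" "Us m \<in> borel_measurable (TF k)"
    "r m \<in> borel_measurable (TF k)" "q m \<in> borel_measurable (TF k)"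
proof -
  show a: "L m \<in> borel_measurable (TF k)" "U m \<in> borel_measurable (TF k)"
    using gen_to_TF[OF assms(1) L_gen_meas(1)[OF assms(2)]]
      gen_to_TF[OF assms(1) L_gen_meas(2)[OF assms(2)]] by auto
  show b: "Ls m \<in> borel_measurable (TF k)" "Us m \<in> borel_measurable (TF k)"
    unfolding Lstar_def Ustar_def by (rule gen_to_TF[OF assms(1)], rule borel_measurable_cond_exp)+
  show "r m \<in> borel_measurable (TF k)" "q m \<in> borel_measurable (TF k)"
    unfolding r_def[abs_def] q_def[abs_def] using a b
    by (intro borel_measurable_divide borel_measurable_diff; simp)+
qed

lemma meas_tl: "tL n \<in> borel_measurable (TF 1) \<and> tU n \<in> borel_measurable (TF 1)"
proof (induction n)
  case 0 then show ?case by simp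
next
  case (Suc n)
  have e: "tL (Suc n) = (\<lambda>x. tL n x + r (Suc n) x * (tU n x - tL n x))"
      "tU (Suc n) = (\<lambda>x. tU n x - q (Suc n) x * (tU n x - tL n x))"
    by (simp_all add: tL_Suc tU_Suc fun_eq_iff)
  have m: "r (Suc n) \<in> borel_measurable (TF 1)" "q (Suc n) \<in> borel_measurable (TF 1)"
    using meas_TF[of 1 "Suc n"] by auto
  show ?case unfolding e using Suc m
    by (intro conjI borel_measurable_add borel_measurable_diff borel_measurable_times; simp)+
qed

lemma meas_tlM: "tL n \<in> borel_measurable M" "tU n \<in> borel_measurable M"
  using meas_tl[of n] TF_to_M by auto

lemma sfs: "sigma_finite_subalgebra M (TF k)"
proof -
  have "finite_measure_subalgebra M (TF k)"
    unfolding finite_measure_subalgebra_def finite_measure_subalgebra_axioms_def subalgebra_def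
    using TF_sub_M finite_measure_axioms by auto
  then show ?thesis by (rule finite_measure_subalgebra_is_sigma_finite)
qed

lemma bint2:
  fixes f g :: "'a \<Rightarrow> real"
  assumes "f \<in> borel_measurable M" "g \<in> borel_measurable M"
    "AE x in M. \<bar>f x\<bar> \<le> B1" "AE x in M. \<bar>g x\<bar> \<le> B2"
  shows "integrable M (\<lambda>x. f x * g x)"
proof (rule integrable_const_bound[where B="B1 * B2"])
  show "AE x in M. norm (f x * g x) \<le> B1 * B2"
    using assms(3,4) by eventually_elim (auto simp: abs_mult intro!: mult_mono)
qed (use assms in simp)

lemma good_abs:
  assumes "good x"
  shows "\<bar>L n x\<bar> \<le> 1" "\<bar>U n x\<bar> \<le> 1" "\<bar>tL n x\<bar> \<le> 1" "\<bar>tU n x\<bar> \<le> 1"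
proof -
  have "0 \<le> L n x" "L n x \<le> U n x" "U n x \<le> 1" using assms unfolding good_def by auto
  then show "\<bar>L n x\<bar> \<le> 1" "\<bar>U n x\<bar> \<le> 1" by auto
  show "\<bar>tL n x\<bar> \<le> 1" "\<bar>tU n x\<bar> \<le> 1" using tl_props[OF assms, of n] by auto
qed

lemma CE:
  assumes "V \<in> borel_measurable (TF (Suc n))" "AE x in M. \<bar>V x\<bar> \<le> B"
  shows "integrable M (\<lambda>x. V x * Ls (Suc n) x)" "(\<integral>x. V x * L n x \<partial>M) = (\<integral>x. V x * Ls (Suc n) x \<partial>M)"
    "integrable M (\<lambda>x. V x * Us (Suc n) x)" "(\<integral>x. V x * U n x \<partial>M) = (\<integral>x. V x * Us (Suc n) x \<partial>M)"
proof -
  interpret S: sigma_finite_subalgebra M "TF (Suc n)" by (rule sfs)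
  have VM: "V \<in> borel_measurable M" using TF_to_M assms(1) by auto
  have gabs1: "AE x in M. \<bar>L n x\<bar> \<le> 1"
    using AE_good by eventually_elim (rule good_abs)
  have gabs2: "AE x in M. \<bar>U n x\<bar> \<le> 1"
    using AE_good by eventually_elim (rule good_abs)
  note gabs = gabs1 gabs2
  have iL: "integrable M (\<lambda>x. V x * L n x)" "integrable M (\<lambda>x. V x * U n x)"
    using bint2[OF VM L_meas assms(2) gabs(1)] bint2[OF VM U_meas assms(2) gabs(2)] by auto
  have aeL: "AE x in M. V x * real_cond_exp M (TF (Suc n)) (L n) x = V x * Ls (Suc n) x"
    using AE_good unfolding good_def by eventually_elim auto
  have aeU: "AE x in M. V x * real_cond_exp M (TF (Suc n)) (U n) x = V x * Us (Suc n) x"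
    using AE_good unfolding good_def by eventually_elim auto
  note R1 = S.real_cond_exp_intg[OF iL(1) assms(1) L_meas]
  note R2 = S.real_cond_exp_intg[OF iL(2) assms(1) U_meas]
  have mL: "(\<lambda>x. V x * Ls (Suc n) x) \<in> borel_measurable M" "(\<lambda>x. V x * Us (Suc n) x) \<in> borel_measurable M"
    using VM TF_to_M[OF meas_TF(3)[of "Suc n" "Suc n"]] TF_to_M[OF meas_TF(4)[of "Suc n" "Suc n"]]
    by auto
  show "integrable M (\<lambda>x. V x * Ls (Suc n) x)"
    using integrable_cong_AE_imp[OF R1(1) mL(1) aeL] .
  show "integrable M (\<lambda>x. V x * Us (Suc n) x)"
    using integrable_cong_AE_imp[OF R2(1) mL(2) aeU] .
  show "(\<integral>x. V x * L n x \<partial>M) = (\<integral>x. V x * Ls (Suc n) x \<partial>M)"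
    using R1(2) integral_cong_AE[OF _ mL(1) aeL] VM by auto
  show "(\<integral>x. V x * U n x \<partial>M) = (\<integral>x. V x * Us (Suc n) x \<partial>M)"
    using R2(2) integral_cong_AE[OF _ mL(2) aeU] VM by auto
qed

lemma AE_tl_abs1: "AE x in M. \<bar>tL n x\<bar> \<le> 1"
  using AE_good by eventually_elim (rule good_abs)

lemma AE_tl_abs2: "AE x in M. \<bar>tU n x\<bar> \<le> 1"
  using AE_good by eventually_elim (rule good_abs)

lemmas AE_tl_abs = AE_tl_abs1 AE_tl_abs2

lemma abs_mult_le: "\<bar>z\<bar> \<le> B \<Longrightarrow> 0 \<le> a \<Longrightarrow> a \<le> 1 \<Longrightarrow> \<bar>z * (a::real)\<bar> \<le> B"
  by (simp add: abs_mult) (meson abs_ge_zero mult_left_le order_trans)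

lemma main:
  "\<forall>Z B. Z \<in> borel_measurable (TF n) \<longrightarrow> (AE x in M. \<bar>Z x\<bar> \<le> B) \<longrightarrow>
     (\<integral>x. Z x * tL n x \<partial>M) = (\<integral>x. Z x * L n x \<partial>M) \<and> (\<integral>x. Z x * tU n x \<partial>M) = (\<integral>x. Z x * U n x \<partial>M)"
proof (induction n)
  case 0 then show ?case by (simp add: L0 U0)
next
  case (Suc n)
  let ?m = "Suc n"
  show ?case
  proof (intro allI impI)
    fix Z :: "'a \<Rightarrow> real" and B :: real assume Zm: "Z \<in> borel_measurable (TF ?m)" and ZB: "AE x in M. \<bar>Z x\<bar> \<le> B"
    define W where "W x = Z x * r ?m x" for x
    define W' where "W' x = Z x * q ?m x" for x
    have rm: "r ?m \<in> borel_measurable (TF ?m)" "q ?m \<in> borel_measurable (TF ?m)"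
      using meas_TF[of ?m ?m] by auto
    have Wm: "W \<in> borel_measurable (TF ?m)" "W' \<in> borel_measurable (TF ?m)"
      unfolding W_def[abs_def] W'_def[abs_def] using Zm rm by (intro borel_measurable_times; simp)+
    have WB1: "AE x in M. \<bar>W x\<bar> \<le> B"
      using ZB AE_good unfolding W_def
    proof eventually_elim
      case (elim x) then show ?case using rq_props[OF elim(2), of n] by (intro abs_mult_le) auto
    qed
    have WB2: "AE x in M. \<bar>W' x\<bar> \<le> B"
      using ZB AE_good unfolding W'_def
    proof eventually_elim
      case (elim x) then show ?case using rq_props[OF elim(2), of n] by (intro abs_mult_le) auto
    qed
    note WB = WB1 WB2
    have Zn: "Z \<in> borel_measurable (TF n)" "W \<in> borel_measurable (TF n)" "W' \<in> borel_measurable (TF n)"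
      using TF_mono_meas[of n ?m] Zm Wm by auto
    have IH: "(\<integral>x. Z x * tL n x \<partial>M) = (\<integral>x. Z x * L n x \<partial>M)"
       "(\<integral>x. Z x * tU n x \<partial>M) = (\<integral>x. Z x * U n x \<partial>M)"
       "(\<integral>x. W x * tL n x \<partial>M) = (\<integral>x. W x * L n x \<partial>M)"
       "(\<integral>x. W x * tU n x \<partial>M) = (\<integral>x. W x * U n x \<partial>M)"
       "(\<integral>x. W' x * tL n x \<partial>M) = (\<integral>x. W' x * L n x \<partial>M)"
       "(\<integral>x. W' x * tU n x \<partial>M) = (\<integral>x. W' x * U n x \<partial>M)"
      using Suc.IH Zn ZB WB by blast+
    have ZM: "Z \<in> borel_measurable M" "W \<in> borel_measurable M" "W' \<in> borel_measurable M"
      using Zm Wm TF_to_M by auto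
    have LsM: "Ls ?m \<in> borel_measurable M" "Us ?m \<in> borel_measurable M"
      using TF_to_M[OF meas_TF(3)[of ?m ?m]] TF_to_M[OF meas_TF(4)[of ?m ?m]] by simp_all
    note C1 = CE[OF Zm ZB] and C2 = CE[OF Wm(1) WB(1)] and C3 = CE[OF Wm(2) WB(2)]
    have I: "integrable M (\<lambda>x. Z x * tL n x)" "integrable M (\<lambda>x. Z x * tU n x)"
      "integrable M (\<lambda>x. W x * tL n x)" "integrable M (\<lambda>x. W x * tU n x)"
      "integrable M (\<lambda>x. W' x * tL n x)" "integrable M (\<lambda>x. W' x * tU n x)"
      using bint2[OF ZM(1) meas_tlM(1) ZB AE_tl_abs(1)] bint2[OF ZM(1) meas_tlM(2) ZB AE_tl_abs(2)]
        bint2[OF ZM(2) meas_tlM(1) WB(1) AE_tl_abs(1)] bint2[OF ZM(2) meas_tlM(2) WB(1) AE_tl_abs(2)]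
        bint2[OF ZM(3) meas_tlM(1) WB(2) AE_tl_abs(1)] bint2[OF ZM(3) meas_tlM(2) WB(2) AE_tl_abs(2)]
      by auto
    have "(\<integral>x. Z x * tL ?m x \<partial>M) = (\<integral>x. Z x * tL n x + W x * tU n x - W x * tL n x \<partial>M)"
      by (rule Bochner_Integration.integral_cong) (auto simp: tL_Suc W_def algebra_simps)
    also have "\<dots> = (\<integral>x. Z x * tL n x \<partial>M) + (\<integral>x. W x * tU n x \<partial>M) - (\<integral>x. W x * tL n x \<partial>M)"
      using I by simp
    also have "\<dots> = (\<integral>x. Z x * Ls ?m x \<partial>M) + (\<integral>x. W x * Us ?m x \<partial>M) - (\<integral>x. W x * Ls ?m x \<partial>M)"
      using IH C1 C2 by simp
    also have "\<dots> = (\<integral>x. Z x * Ls ?m x + W x * Us ?m x - W x * Ls ?m x \<partial>M)"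
      using C1 C2 by simp
    also have "\<dots> = (\<integral>x. Z x * L ?m x \<partial>M)"
    proof (rule integral_cong_AE)
      show "AE x in M. Z x * Ls ?m x + W x * Us ?m x - W x * Ls ?m x = Z x * L ?m x"
        using AE_good
      proof eventually_elim
        case (elim x)
        have "W x * Us ?m x - W x * Ls ?m x = Z x * (r ?m x * (Us ?m x - Ls ?m x))"
          unfolding W_def by (simp add: algebra_simps)
        also have "\<dots> = Z x * (L ?m x - Ls ?m x)" using rq_props[OF elim, of n] by simp
        finally show ?case by (simp add: algebra_simps)
      qed
    qed (insert ZM LsM L_meas[of ?m], (intro borel_measurable_add borel_measurable_diff borel_measurable_times; assumption))+
    finally have A: "(\<integral>x. Z x * tL ?m x \<partial>M) = (\<integral>x. Z x * L ?m x \<partial>M)" .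
    have "(\<integral>x. Z x * tU ?m x \<partial>M) = (\<integral>x. Z x * tU n x - W' x * tU n x + W' x * tL n x \<partial>M)"
      by (rule Bochner_Integration.integral_cong) (auto simp: tU_Suc W'_def algebra_simps)
    also have "\<dots> = (\<integral>x. Z x * tU n x \<partial>M) - (\<integral>x. W' x * tU n x \<partial>M) + (\<integral>x. W' x * tL n x \<partial>M)"
      using I by simp
    also have "\<dots> = (\<integral>x. Z x * Us ?m x \<partial>M) - (\<integral>x. W' x * Us ?m x \<partial>M) + (\<integral>x. W' x * Ls ?m x \<partial>M)"
      using IH C1 C3 by simp
    also have "\<dots> = (\<integral>x. Z x * Us ?m x - W' x * Us ?m x + W' x * Ls ?m x \<partial>M)"
      using C1 C3 by simp
    also have "\<dots> = (\<integral>x. Z x * U ?m x \<partial>M)"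
    proof (rule integral_cong_AE)
      show "AE x in M. Z x * Us ?m x - W' x * Us ?m x + W' x * Ls ?m x = Z x * U ?m x"
        using AE_good
      proof eventually_elim
        case (elim x)
        have "W' x * Us ?m x - W' x * Ls ?m x = Z x * (q ?m x * (Us ?m x - Ls ?m x))"
          unfolding W'_def by (simp add: algebra_simps)
        also have "\<dots> = Z x * (Us ?m x - U ?m x)" using rq_props[OF elim, of n] by simp
        finally show ?case by (simp add: algebra_simps)
      qed
    qed (insert ZM LsM U_meas[of ?m], (intro borel_measurable_add borel_measurable_diff borel_measurable_times; assumption))+
    finally show "(\<integral>x. Z x * tL ?m x \<partial>M) = (\<integral>x. Z x * L ?m x \<partial>M) \<and>
       (\<integral>x. Z x * tU ?m x \<partial>M) = (\<integral>x. Z x * U ?m x \<partial>M)" using A by simp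
  qed
qed

lemma exp_tl: "expectation (tL n) = expectation (L n)" "expectation (tU n) = expectation (U n)"
  using main[of n] by (auto dest!: spec[of _ "\<lambda>_. 1"] spec[of _ 1])

lemma fub:
  fixes V :: "'a \<Rightarrow> real \<times> real" and P :: "real \<Rightarrow> real \<times> real \<Rightarrow> bool"
  assumes V: "V \<in> TF 1 \<rightarrow>\<^sub>M borel"
    and PSm: "{z :: (real\<times>real)\<times>(real\<times>real). P (fst (fst z)) (snd z)} \<in> sets (borel \<Otimes>\<^sub>M borel)"
  shows "emeasure M {x \<in> space M. P (G x) (V x)} = (\<integral>\<^sup>+x. emeasure lborel ({0..1} \<inter> {g. P g (V x)}) \<partial>M)"
proof -
  define X where "X x = (G x, 0::real)" for x
  let ?S = "{z :: (real\<times>real)\<times>(real\<times>real). P (fst (fst z)) (snd z)}"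
  have XM: "X \<in> M \<rightarrow>\<^sub>M borel" unfolding X_def[abs_def] borel_prod[symmetric]
    using G_meas by (intro measurable_Pair) auto
  have VM: "V \<in> M \<rightarrow>\<^sub>M borel" using TF_to_M V .
  have emb: "(\<lambda>g::real. (g, 0::real)) \<in> borel \<rightarrow>\<^sub>M borel"
    unfolding borel_prod[symmetric] by (intro measurable_Pair) auto
  have ind: "indep_var borel X borel V"
    unfolding indep_var_def indep_vars_def2
  proof
    show "\<forall>i\<in>UNIV. random_variable (case_bool borel borel i) (case_bool X V i)"
      using XM VM by (auto split: bool.split)
    show "indep_sets (\<lambda>i. {case_bool X V i -` A \<inter> space M |A. A \<in> sets (case_bool borel borel i)}) UNIV"
    proof (rule indep_sets_mono_sets[OF G_indep[unfolded indep_set_def]])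
      fix i :: bool
      show "{case_bool X V i -` A \<inter> space M |A. A \<in> sets (case_bool borel borel i)}
          \<subseteq> case_bool {G -` A \<inter> space M |A. A \<in> sets borel} (sets (TF 1)) i"
      proof (cases i)
        case True
        { fix A :: "(real\<times>real) set" assume "A \<in> sets borel"
          then have "(\<lambda>g. (g, 0::real)) -` A \<in> sets borel" using measurable_sets[OF emb, of A] by simp
          moreover have "X -` A \<inter> space M = G -` ((\<lambda>g. (g, 0::real)) -` A) \<inter> space M" by (auto simp: X_def)
          ultimately have "\<exists>B. X -` A \<inter> space M = G -` B \<inter> space M \<and> B \<in> sets borel" by blast }
        then show ?thesis using True by auto
      next
        case False
        then show ?thesis using measurable_sets[OF V] by auto
      qed
    qed
  qed
  have dist: "distr M borel X \<Otimes>\<^sub>M distr M borel V = distr M (borel \<Otimes>\<^sub>M borel) (\<lambda>x. (X x, V x))"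
    using ind indep_var_distribution_eq by blast
  interpret DX: prob_space "distr M borel X" by (rule prob_space_distr[OF XM])
  interpret DV: prob_space "distr M borel V" by (rule prob_space_distr[OF VM])
  interpret PS: pair_sigma_finite "distr M borel X" "distr M borel V"
    by (simp add: pair_sigma_finite_def DX.sigma_finite_measure_axioms DV.sigma_finite_measure_axioms)
  have "sets (distr M borel X \<Otimes>\<^sub>M distr M borel V) = sets (borel \<Otimes>\<^sub>M borel)"
    by (intro sets_pair_measure_cong) simp_all
  then have Ssets: "?S \<in> sets (distr M borel X \<Otimes>\<^sub>M distr M borel V)" using PSm by simp
  have XVM: "(\<lambda>x. (X x, V x)) \<in> M \<rightarrow>\<^sub>M borel \<Otimes>\<^sub>M borel" using XM VM by (rule measurable_Pair)
  have "emeasure M {x \<in> space M. P (G x) (V x)} = emeasure (distr M (borel \<Otimes>\<^sub>M borel) (\<lambda>x. (X x, V x))) ?S"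
    by (subst emeasure_distr[OF XVM PSm], rule arg_cong[where f="emeasure M"]) (auto simp: X_def)
  also have "\<dots> = emeasure (distr M borel X \<Otimes>\<^sub>M distr M borel V) ?S" by (simp add: dist)
  also have "\<dots> = (\<integral>\<^sup>+y. emeasure (distr M borel X) ((\<lambda>x. (x,y)) -` ?S) \<partial>distr M borel V)"
    by (rule PS.emeasure_pair_measure_alt2[OF Ssets])
  also have "\<dots> = (\<integral>\<^sup>+x. emeasure (distr M borel X) ((\<lambda>p. (p, V x)) -` ?S) \<partial>M)"
    by (rule nn_integral_distr[OF VM]) (use PS.measurable_emeasure_Pair2[OF Ssets] in simp)
  also have "\<dots> = (\<integral>\<^sup>+x. emeasure lborel ({0..1} \<inter> {g. P g (V x)}) \<partial>M)"
  proof (rule nn_integral_cong)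
    fix x
    have p1: "(\<lambda>p. (p, V x)) \<in> borel \<rightarrow>\<^sub>M borel \<Otimes>\<^sub>M borel" by (intro measurable_Pair) auto
    have B1: "(\<lambda>p. (p, V x)) -` ?S \<in> sets borel" using measurable_sets[OF p1 PSm] by simp
    have "(\<lambda>g. (g, 0::real)) -` ((\<lambda>p. (p, V x)) -` ?S) \<in> sets borel"
      using measurable_sets[OF emb B1] by simp
    then have B: "{g. P g (V x)} \<in> sets borel" by (simp add: vimage_def)
    have "emeasure (distr M borel X) ((\<lambda>p. (p, V x)) -` ?S) = emeasure M (X -` ((\<lambda>p. (p, V x)) -` ?S) \<inter> space M)"
      by (rule emeasure_distr[OF XM B1])
    also have "\<dots> = emeasure M (G -` {g. P g (V x)} \<inter> space M)" by (simp add: X_def vimage_def)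
    also have "\<dots> = emeasure (distr M borel G) {g. P g (V x)}" by (rule emeasure_distr[symmetric, OF G_meas B])
    also have "\<dots> = emeasure lborel ({0..1} \<inter> {g. P g (V x)})" using B by (simp add: G_unif divide_ennreal_def)
    finally show "emeasure (distr M borel X) ((\<lambda>p. (p, V x)) -` ?S) = emeasure lborel ({0..1} \<inter> {g. P g (V x)})" .
  qed
  finally show ?thesis .
qed

lemma V_meas: "(\<lambda>x. (tL n x, tU n x)) \<in> TF 1 \<rightarrow>\<^sub>M borel"
  unfolding borel_prod[symmetric] using meas_tl[of n] by (intro measurable_Pair) auto

lemma prob_le: "measure M {x \<in> space M. G x \<le> tL n x} = expectation (L n)"
proof -
  have S: "{z :: (real\<times>real)\<times>(real\<times>real). fst (fst z) \<le> fst (snd z)} \<in> sets (borel \<Otimes>\<^sub>M borel)"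
    unfolding borel_prod by (intro borel_closed closed_Collect_le continuous_intros)
  have e: "emeasure M {x \<in> space M. G x \<le> fst (tL n x, tU n x)}
      = (\<integral>\<^sup>+x. emeasure lborel ({0..1} \<inter> {g. g \<le> fst (tL n x, tU n x)}) \<partial>M)"
    by (rule fub[OF V_meas, where P="\<lambda>g v. g \<le> fst v"]) (use S in simp)
  have "measure M {x \<in> space M. G x \<le> tL n x} = enn2real (\<integral>\<^sup>+x. emeasure lborel ({0..1} \<inter> {g. g \<le> tL n x}) \<partial>M)"
    using e by (simp add: measure_def)
  also have "\<dots> = (\<integral>x. tL n x \<partial>M)"
  proof (rule enn2real_nn_integral_eq_integral)
    show "AE x in M. emeasure lborel ({0..1} \<inter> {g. g \<le> tL n x}) = ennreal (tL n x)"
      using AE_good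
    proof eventually_elim
      case (elim x)
      then have "0 \<le> tL n x" "tL n x \<le> 1" using tl_props[OF elim, of n] by auto
      then have "{0..1} \<inter> {g. g \<le> tL n x} = {0..tL n x}" by auto
      then show ?case using \<open>0 \<le> tL n x\<close> by simp
    qed
    show "AE x in M. 0 \<le> tL n x" using AE_good by eventually_elim (use tl_props in auto)
  qed (rule meas_tlM)
  finally show ?thesis using exp_tl by simp
qed

lemma prob_between: "measure M {x \<in> space M. tL n x < G x \<and> G x \<le> tU n x} = expectation (U n) - expectation (L n)"
proof -
  have S: "{z :: (real\<times>real)\<times>(real\<times>real). fst (snd z) < fst (fst z) \<and> fst (fst z) \<le> snd (snd z)} \<in> sets (borel \<Otimes>\<^sub>M borel)"
  proof -
    have "{z :: (real\<times>real)\<times>(real\<times>real). fst (snd z) < fst (fst z)} \<in> sets borel"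
      by (intro borel_open open_Collect_less continuous_intros)
    moreover have "{z :: (real\<times>real)\<times>(real\<times>real). fst (fst z) \<le> snd (snd z)} \<in> sets borel"
      by (intro borel_closed closed_Collect_le continuous_intros)
    ultimately have "{z :: (real\<times>real)\<times>(real\<times>real). fst (snd z) < fst (fst z)} \<inter> {z. fst (fst z) \<le> snd (snd z)} \<in> sets borel"
      by (rule sets.Int)
    then show ?thesis unfolding borel_prod by (simp add: Collect_conj_eq)
  qed
  have e: "emeasure M {x \<in> space M. fst (tL n x, tU n x) < G x \<and> G x \<le> snd (tL n x, tU n x)}
      = (\<integral>\<^sup>+x. emeasure lborel ({0..1} \<inter> {g. fst (tL n x, tU n x) < g \<and> g \<le> snd (tL n x, tU n x)}) \<partial>M)"
    by (rule fub[OF V_meas, where P="\<lambda>g v. fst v < g \<and> g \<le> snd v"]) (use S in simp)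
  have "measure M {x \<in> space M. tL n x < G x \<and> G x \<le> tU n x}
      = enn2real (\<integral>\<^sup>+x. emeasure lborel ({0..1} \<inter> {g. tL n x < g \<and> g \<le> tU n x}) \<partial>M)"
    using e by (simp add: measure_def)
  also have "\<dots> = (\<integral>x. tU n x - tL n x \<partial>M)"
  proof (rule enn2real_nn_integral_eq_integral)
    show "AE x in M. emeasure lborel ({0..1} \<inter> {g. tL n x < g \<and> g \<le> tU n x}) = ennreal (tU n x - tL n x)"
      using AE_good
    proof eventually_elim
      case (elim x)
      then have "0 \<le> tL n x" "tL n x \<le> tU n x" "tU n x \<le> 1" using tl_props[OF elim, of n] by auto
      then have "{0..1} \<inter> {g. tL n x < g \<and> g \<le> tU n x} = {tL n x<..tU n x}" by auto
      then show ?case using \<open>tL n x \<le> tU n x\<close> by simp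
    qed
    show "AE x in M. 0 \<le> tU n x - tL n x" using AE_good by eventually_elim (use tl_props in auto)
  qed (use meas_tlM in auto)
  also have "\<dots> = expectation (tU n) - expectation (tL n)"
  proof (rule Bochner_Integration.integral_diff)
    show "integrable M (tU n)" "integrable M (tL n)"
    proof -
      have "AE x in M. norm (tU n x) \<le> 1" "AE x in M. norm (tL n x) \<le> 1" using AE_tl_abs by simp_all
      then show "integrable M (tU n)" "integrable M (tL n)"
        using integrable_const_bound meas_tlM by blast+
    qed
  qed
  finally show ?thesis using exp_tl by simp
qed

lemma stopN_gt: "enat n < stopN M L U G x \<longleftrightarrow> (\<forall>k. 1 \<le> k \<longrightarrow> k \<le> n \<longrightarrow> tL k x < G x \<and> G x \<le> tU k x)"
proof (cases "\<exists>k\<ge>1. G x \<le> tL k x \<or> G x > tU k x")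
  case True
  let ?K = "LEAST k. k \<ge> 1 \<and> (G x \<le> tL k x \<or> G x > tU k x)"
  have K: "?K \<ge> 1 \<and> (G x \<le> tL ?K x \<or> G x > tU ?K x)" using LeastI_ex[OF True[unfolded Bex_def]] by simp
  have Kl: "\<And>k. k \<ge> 1 \<Longrightarrow> (G x \<le> tL k x \<or> G x > tU k x) \<Longrightarrow> ?K \<le> k" by (rule Least_le) simp
  have "n < ?K \<longleftrightarrow> (\<forall>k. 1 \<le> k \<longrightarrow> k \<le> n \<longrightarrow> tL k x < G x \<and> G x \<le> tU k x)"
  proof
    assume "n < ?K"
    then show "\<forall>k. 1 \<le> k \<longrightarrow> k \<le> n \<longrightarrow> tL k x < G x \<and> G x \<le> tU k x"
      using Kl by (meson le_trans not_le not_less)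
  next
    assume "\<forall>k. 1 \<le> k \<longrightarrow> k \<le> n \<longrightarrow> tL k x < G x \<and> G x \<le> tU k x"
    then show "n < ?K" using K by (meson not_le not_less)
  qed
  moreover have "stopN M L U G x = enat ?K" unfolding stopN_def by (rule if_P[OF True])
  ultimately show ?thesis by simp
next
  case False
  have "stopN M L U G x = \<infinity>" unfolding stopN_def by (rule if_not_P[OF False])
  moreover have "\<forall>k. 1 \<le> k \<longrightarrow> k \<le> n \<longrightarrow> tL k x < G x \<and> G x \<le> tU k x"
    using False by (meson not_le not_less)
  ultimately show ?thesis by simp
qed

lemma stopN_inf: "stopN M L U G x = \<infinity> \<longleftrightarrow> (\<forall>k\<ge>1. tL k x < G x \<and> G x \<le> tU k x)"
proof
  assume "stopN M L U G x = \<infinity>"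
  then have "\<And>n. enat n < stopN M L U G x" by simp
  then show "\<forall>k\<ge>1. tL k x < G x \<and> G x \<le> tU k x" using stopN_gt by blast
next
  assume h: "\<forall>k\<ge>1. tL k x < G x \<and> G x \<le> tU k x"
  show "stopN M L U G x = \<infinity>"
  proof (cases "stopN M L U G x")
    case (enat m)
    have "enat m < stopN M L U G x" using stopN_gt h by blast
    then show ?thesis using enat by simp
  qed
qed

lemma Kmin:
  assumes "1 \<le> j" "j < (LEAST k. k \<ge> 1 \<and> (G x \<le> tL k x \<or> G x > tU k x))"
  shows "tL j x < G x \<and> G x \<le> tU j x"
proof -
  have "\<not> (G x \<le> tL j x \<or> G x > tU j x)"
  proof
    assume h: "G x \<le> tL j x \<or> G x > tU j x"
    have "(LEAST k. k \<ge> 1 \<and> (G x \<le> tL k x \<or> G x > tU k x)) \<le> j"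
      by (rule Least_le) (use h assms(1) in blast)
    then show False using assms(2) by simp
  qed
  then show ?thesis by (simp add: not_le not_less)
qed

lemma coin_iff: "coinC M L U G x = 1 \<longleftrightarrow>
   (\<exists>k\<ge>1. (\<forall>j. 1 \<le> j \<longrightarrow> j < k \<longrightarrow> tL j x < G x \<and> G x \<le> tU j x) \<and> G x \<le> tL k x)"
proof (cases "\<exists>k\<ge>1. G x \<le> tL k x \<or> G x > tU k x")
  case True
  let ?K = "LEAST k. k \<ge> 1 \<and> (G x \<le> tL k x \<or> G x > tU k x)"
  have K: "?K \<ge> 1 \<and> (G x \<le> tL ?K x \<or> G x > tU ?K x)" using LeastI_ex[OF True[unfolded Bex_def]] by simp
  have Kl: "\<And>k. k \<ge> 1 \<Longrightarrow> (G x \<le> tL k x \<or> G x > tU k x) \<Longrightarrow> ?K \<le> k" by (rule Least_le) simp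
  have st: "stopN M L U G x = enat ?K" unfolding stopN_def by (rule if_P[OF True])
  have e: "coinC M L U G x = (if G x \<le> tL ?K x then 1 else 0)"
    unfolding coinC_def st by (simp only: enat.case)
  show ?thesis
  proof
    assume c1: "coinC M L U G x = 1"
    have "G x \<le> tL ?K x"
    proof (rule ccontr)
      assume "\<not> G x \<le> tL ?K x"
      then have "coinC M L U G x = 0" unfolding e by (rule if_not_P)
      then show False using c1 by simp
    qed
    moreover have "\<forall>j. 1 \<le> j \<longrightarrow> j < ?K \<longrightarrow> tL j x < G x \<and> G x \<le> tU j x"
    proof (intro allI impI)
      fix j assume "1 \<le> j" "j < ?K"
      then show "tL j x < G x \<and> G x \<le> tU j x" by (rule Kmin)
    qed
    ultimately show "\<exists>k\<ge>1. (\<forall>j. 1 \<le> j \<longrightarrow> j < k \<longrightarrow> tL j x < G x \<and> G x \<le> tU j x) \<and> G x \<le> tL k x"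
      using K by blast
  next
    assume "\<exists>k\<ge>1. (\<forall>j. 1 \<le> j \<longrightarrow> j < k \<longrightarrow> tL j x < G x \<and> G x \<le> tU j x) \<and> G x \<le> tL k x"
    then obtain k where k: "k \<ge> 1" "\<forall>j. 1 \<le> j \<longrightarrow> j < k \<longrightarrow> tL j x < G x \<and> G x \<le> tU j x" "G x \<le> tL k x"
      by blast
    have "?K \<le> k" using Kl k by blast
    moreover have "\<not> ?K < k"
    proof
      assume "?K < k"
      then have "tL ?K x < G x \<and> G x \<le> tU ?K x" using k(2) K by blast
      then show False using K by linarith
    qed
    ultimately have "?K = k" by simp
    then have "G x \<le> tL ?K x" using k(3) by simp
    then show "coinC M L U G x = 1" unfolding e by (rule if_P)
  qed
next
  case False
  have st: "stopN M L U G x = \<infinity>" unfolding stopN_def by (rule if_not_P[OF False])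
  have "coinC M L U G x = 0" unfolding coinC_def st by (simp only: enat.case)
  moreover have "\<not> (\<exists>k\<ge>1. (\<forall>j. 1 \<le> j \<longrightarrow> j < k \<longrightarrow> tL j x < G x \<and> G x \<le> tU j x) \<and> G x \<le> tL k x)"
    using False by blast
  ultimately show ?thesis by simp
qed

lemma meas_sets:
  "{x \<in> space M. \<forall>k\<in>{1..n}. tL k x < G x \<and> G x \<le> tU k x} \<in> sets M"
  "{x \<in> space M. \<forall>k\<in>{1..}. tL k x < G x \<and> G x \<le> tU k x} \<in> sets M"
  "{x \<in> space M. \<exists>k\<in>{1..}. (\<forall>j\<in>{1..<k}. tL j x < G x \<and> G x \<le> tU j x) \<and> G x \<le> tL k x} \<in> sets M"
  "{x \<in> space M. \<exists>k\<in>{..i}. G x \<le> tL (Suc k) x} \<in> sets M"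
  "{x \<in> space M. tL n x < G x \<and> G x \<le> tU n x} \<in> sets M"
  "{x \<in> space M. G x \<le> tL n x} \<in> sets M"
proof -
  note [measurable] = meas_tlM G_meas
  show "{x \<in> space M. \<forall>k\<in>{1..n}. tL k x < G x \<and> G x \<le> tU k x} \<in> sets M" by measurable
  show "{x \<in> space M. \<forall>k\<in>{1..}. tL k x < G x \<and> G x \<le> tU k x} \<in> sets M" by measurable
  show "{x \<in> space M. \<exists>k\<in>{1..}. (\<forall>j\<in>{1..<k}. tL j x < G x \<and> G x \<le> tU j x) \<and> G x \<le> tL k x} \<in> sets M" by measurable
  show "{x \<in> space M. \<exists>k\<in>{..i}. G x \<le> tL (Suc k) x} \<in> sets M" by measurable
  show "{x \<in> space M. tL n x < G x \<and> G x \<le> tU n x} \<in> sets M" by measurable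
  show "{x \<in> space M. G x \<le> tL n x} \<in> sets M" by measurable
qed

lemma claim3:
  assumes "n \<ge> 1"
  shows "measure M {x \<in> space M. stopN M L U G x > enat n} = expectation (U n) - expectation (L n)"
proof -
  have "{x \<in> space M. stopN M L U G x > enat n} = {x \<in> space M. \<forall>k\<in>{1..n}. tL k x < G x \<and> G x \<le> tU k x}"
    using stopN_gt by auto
  also have "measure M \<dots> = measure M {x \<in> space M. tL n x < G x \<and> G x \<le> tU n x}"
  proof (rule measure_eq_AE)
    show "AE x in M. (x \<in> {x \<in> space M. \<forall>k\<in>{1..n}. tL k x < G x \<and> G x \<le> tU k x}) =
        (x \<in> {x \<in> space M. tL n x < G x \<and> G x \<le> tU n x})"
      using AE_good
    proof eventually_elim
      case (elim x)
      have h: "\<forall>k\<in>{1..n}. tL k x < G x \<and> G x \<le> tU k x" if t: "tL n x < G x \<and> G x \<le> tU n x"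
      proof
        fix k assume "k \<in> {1..n}"
        then have "k \<le> n" by simp
        then have "tL k x \<le> tL n x" "tU n x \<le> tU k x" using tl_mono[OF elim] by auto
        then show "tL k x < G x \<and> G x \<le> tU k x" using t by linarith
      qed
      have "n \<in> {1..n}" using assms by simp
      then show ?case using h by blast
    qed
  qed (rule meas_sets)+
  also have "\<dots> = expectation (U n) - expectation (L n)" by (rule prob_between)
  finally show ?thesis .
qed

lemma claim2: "measure M {x \<in> space M. coinC M L U G x = 1} = s"
proof -
  define A where "A i = {x \<in> space M. \<exists>k\<in>{..i}. G x \<le> tL (Suc k) x}" for i
  have As: "range A \<subseteq> sets M" using meas_sets(4) unfolding A_def by auto
  have inc: "incseq A" unfolding A_def incseq_def by fastforce
  have lim1: "(\<lambda>i. measure M (A i)) \<longlonglongrightarrow> measure M (\<Union>i. A i)"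
    by (rule Lim_measure_incseq[OF As inc]) simp
  have mA: "measure M (A i) = expectation (L (Suc i))" for i
  proof -
    have "measure M (A i) = measure M {x \<in> space M. G x \<le> tL (Suc i) x}"
    proof (rule measure_eq_AE)
      show "AE x in M. (x \<in> A i) = (x \<in> {x \<in> space M. G x \<le> tL (Suc i) x})"
        using AE_good
      proof eventually_elim
        case (elim x)
        show ?case unfolding A_def using tl_mono(1)[OF elim, of "Suc _" "Suc i"]
          by (auto intro: order_trans)
      qed
    qed (use As meas_sets in auto)
    then show ?thesis using prob_le by simp
  qed
  have lim2: "(\<lambda>i. measure M (A i)) \<longlonglongrightarrow> s"
    unfolding mA using LIMSEQ_Suc[OF l_lim] .
  have UA: "measure M (\<Union>i. A i) = s" using LIMSEQ_unique[OF lim1 lim2] .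
  have "{x \<in> space M. coinC M L U G x = 1} =
      {x \<in> space M. \<exists>k\<in>{1..}. (\<forall>j\<in>{1..<k}. tL j x < G x \<and> G x \<le> tU j x) \<and> G x \<le> tL k x}"
    by (intro Collect_cong) (unfold coin_iff, simp add: Bex_def Ball_def imp_conjL)
  also have "measure M \<dots> = measure M (\<Union>i. A i)"
  proof (rule measure_eq_AE)
    show "AE x in M. (x \<in> {x \<in> space M. \<exists>k\<in>{1..}. (\<forall>j\<in>{1..<k}. tL j x < G x \<and> G x \<le> tU j x) \<and> G x \<le> tL k x})
        = (x \<in> (\<Union>i. A i))"
      using AE_good
    proof eventually_elim
      case (elim x)
      show ?case
      proof
        assume "x \<in> {x \<in> space M. \<exists>k\<in>{1..}. (\<forall>j\<in>{1..<k}. tL j x < G x \<and> G x \<le> tU j x) \<and> G x \<le> tL k x}"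
        then obtain k where "x \<in> space M" "k \<ge> 1" "G x \<le> tL k x" by auto
        then show "x \<in> (\<Union>i. A i)" unfolding A_def
          by (intro UN_I[of "k - 1"]) (auto intro!: bexI[of _ "k - 1"])
      next
        assume "x \<in> (\<Union>i. A i)"
        then obtain i where xs: "x \<in> space M" and "G x \<le> tL (Suc i) x" unfolding A_def
          using tl_mono(1)[OF elim] by (auto intro: order_trans)
        then have ex: "\<exists>k\<ge>1. G x \<le> tL k x \<or> G x > tU k x" by (intro exI[of _ "Suc i"]) auto
        let ?K = "LEAST k. k \<ge> 1 \<and> (G x \<le> tL k x \<or> G x > tU k x)"
        have K: "?K \<ge> 1 \<and> (G x \<le> tL ?K x \<or> G x > tU ?K x)" using LeastI_ex[OF ex] by simp
        have Kl: "\<And>k. k \<ge> 1 \<Longrightarrow> (G x \<le> tL k x \<or> G x > tU k x) \<Longrightarrow> ?K \<le> k" by (rule Least_le) simp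
        have KS: "?K \<le> Suc i" using Kl \<open>G x \<le> tL (Suc i) x\<close> by simp
        have "G x \<le> tL ?K x"
        proof (rule ccontr)
          assume "\<not> G x \<le> tL ?K x"
          then have "G x > tU ?K x" using K by simp
          moreover have "tU (Suc i) x \<le> tU ?K x" using tl_mono(2)[OF elim KS] .
          moreover have "tL (Suc i) x \<le> tU (Suc i) x" using tl_props[OF elim] by simp
          ultimately show False using \<open>G x \<le> tL (Suc i) x\<close> by linarith
        qed
        moreover have "\<forall>j. 1 \<le> j \<longrightarrow> j < ?K \<longrightarrow> tL j x < G x \<and> G x \<le> tU j x"
        proof (intro allI impI)
          fix j assume "1 \<le> j" "j < ?K"
          then show "tL j x < G x \<and> G x \<le> tU j x" by (rule Kmin)
        qed
        ultimately have h: "G x \<le> tL ?K x" "\<forall>j\<in>{1..<?K}. tL j x < G x \<and> G x \<le> tU j x"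
          by auto
        have m: "?K \<in> {1..}" using K by simp
        show "x \<in> {x \<in> space M. \<exists>k\<in>{1..}. (\<forall>j\<in>{1..<k}. tL j x < G x \<and> G x \<le> tU j x) \<and> G x \<le> tL k x}"
          using xs m h by blast
      qed
    qed
  qed (use meas_sets As in auto)
  finally show ?thesis using UA by simp
qed

lemma claim1: "AE x in M. stopN M L U G x < \<infinity>"
proof (rule AE_I')
  let ?B = "{x \<in> space M. \<forall>k\<in>{1..}. tL k x < G x \<and> G x \<le> tU k x}"
  have Bs: "?B \<in> sets M" by (rule meas_sets)
  have le: "measure M ?B \<le> expectation (U (Suc n)) - expectation (L (Suc n))" for n
  proof -
    have "measure M ?B \<le> measure M {x \<in> space M. tL (Suc n) x < G x \<and> G x \<le> tU (Suc n) x}"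
      by (rule finite_measure_mono) (auto intro: meas_sets)
    then show ?thesis using prob_between by simp
  qed
  have "(\<lambda>n. expectation (U (Suc n)) - expectation (L (Suc n))) \<longlonglongrightarrow> s - s"
    by (intro tendsto_diff LIMSEQ_Suc u_lim l_lim)
  then have "measure M ?B \<le> 0" using le by (intro LIMSEQ_le_const) auto
  then have "measure M ?B = 0" using measure_nonneg[of M ?B] by linarith
  then show "?B \<in> null_sets M" using Bs by (simp add: emeasure_eq_measure null_sets_def)
  show "{x \<in> space M. \<not> stopN M L U G x < \<infinity>} \<subseteq> ?B"
    using stopN_inf by (auto simp: less_top[symmetric])
qed

end

theorem theorem1:
  fixes M :: "'a measure" and L U :: "nat \<Rightarrow> 'a \<Rightarrow> real" and G :: "'a \<Rightarrow> real" and s :: real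
  assumes "prob_space M"
    and "s \<in> {0..1}"
    and L_meas: "\<And>n. L n \<in> borel_measurable M"
    and U_meas: "\<And>n. U n \<in> borel_measurable M"
    and L0: "\<And>x. L 0 x = 0"
    and U0: "\<And>x. U 0 x = 1"
    and bounds: "AE x in M. \<forall>n\<ge>1. L n x \<le> U n x \<and> L n x \<in> {0..1} \<and> U n x \<in> {0..1}"
    and l_mono: "\<And>n. n \<ge> 1 \<Longrightarrow> prob_space.expectation M (L n) \<le> prob_space.expectation M (L (Suc n))"
    and l_lim: "(\<lambda>n. prob_space.expectation M (L n)) \<longlonglongrightarrow> s"
    and u_mono: "\<And>n. n \<ge> 1 \<Longrightarrow> prob_space.expectation M (U (Suc n)) \<le> prob_space.expectation M (U n)"
    and u_lim: "(\<lambda>n. prob_space.expectation M (U n)) \<longlonglongrightarrow> s"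
    and L_super: "\<And>n. n \<ge> 1 \<Longrightarrow> AE x in M.
        real_cond_exp M (tail_F M L U n) (L (n - 1)) x = Lstar M L U n x \<and> Lstar M L U n x \<le> L n x"
    and U_sub: "\<And>n. n \<ge> 1 \<Longrightarrow> AE x in M.
        real_cond_exp M (tail_F M L U n) (U (n - 1)) x = Ustar M L U n x \<and> Ustar M L U n x \<ge> U n x"
    and gap: "\<And>n. n \<ge> 1 \<Longrightarrow> AE x in M. Ustar M L U n x > Lstar M L U n x"
    and G_meas: "G \<in> borel_measurable M"
    and G_unif: "distr M borel G = uniform_measure lborel {0..1}"
    and G_indep: "prob_space.indep_set M {G -` A \<inter> space M | A. A \<in> sets (borel :: real measure)}
        (sets (tail_F M L U 1))"
  shows "(AE x in M. stopN M L U G x < \<infinity>)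
    \<and> measure M {x \<in> space M. coinC M L U G x = 1} = s
    \<and> (\<forall>n\<ge>1. measure M {x \<in> space M. stopN M L U G x > enat n}
          = prob_space.expectation M (U n) - prob_space.expectation M (L n))"
proof -
  interpret S: setting M L U G s
    by (rule setting.intro[OF assms(1)], rule setting_axioms.intro; fact assms)
  show ?thesis using S.claim1 S.claim2 S.claim3 by blast
qed

end
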